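(* Let $A>0$ and let $F_k=(F_k^1,\dots,F_k^d)\in\mathbb{R}^d$, $k=1,2$, be constant vectors with $F_1^d>0$ and $F_2^d\ge0$. Define $$F(y)=\begin{cases}F_1,& y\in\Pi_1=\{y\in\mathbb{R}^d: y^d<A\},\\ F_2,& y\in\Pi_2=\{y\in\mathbb{R}^d: y^d\ge A\}.\end{cases}$$ Let $\Lambda\subset\Pi_1$ be the closure of an open connected set with piecewise smooth boundary. For $x\in\Lambda$ let $y(t,x)$ solve $\frac{d^2y}{dt^2}=F(y)$, $y(0,x)=x$, $\frac{dy}{dt}(0,x)=0$ (zero initial velocities). Then there are no collisions ($y(t,x_1)\ne y(t,x_2)$ for all $t\ge0$ and all $x_1\ne x_2$ in $\Lambda$) if and only if $F_1^d\le F_2^d$.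
   Context: $y^d$ denotes the $d$-th coordinate of $y\in\mathbb{R}^d$. *)

theory Defs
  imports "HOL-Analysis.Analysis"
begin

definition force :: "real \<Rightarrow> real^'n \<Rightarrow> real^'n \<Rightarrow> 'n \<Rightarrow> real^'n \<Rightarrow> real^'n" where
  "force A F1 F2 d z = (if z $ d < A then F1 else F2)"

text \<open>y(.,x) solves y'' = F(y), y(0)=x, y'(0)=0 on [0,inf): y is differentiable with continuous
  velocity v, and v has right derivative F(y(t)) at every t \<ge> 0 (the force is discontinuous,
  so only one-sided second derivatives exist at the crossing time).\<close>
definition solves_motion ::
  "real \<Rightarrow> real^'n \<Rightarrow> real^'n \<Rightarrow> 'n \<Rightarrow> (real \<Rightarrow> real^'n) \<Rightarrow> (real \<Rightarrow> real^'n) \<Rightarrow> real^'n \<Rightarrow> bool" where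
  "solves_motion A F1 F2 d y v x \<longleftrightarrow>
     y 0 = x \<and> v 0 = 0 \<and> continuous_on {0..} v \<and>
     (\<forall>t\<ge>0. (y has_vector_derivative v t) (at t within {0..}) \<and>
              (v has_vector_derivative force A F1 F2 d (y t)) (at_right t))"

end

theory Submission imports Defs begin

lemma rderiv_zero_aux:
  fixes w :: "real \<Rightarrow> 'a::real_normed_vector"
  assumes ab: "a \<le> b" and cont: "continuous_on {a..b} w"
    and der: "\<And>s. a \<le> s \<Longrightarrow> s < b \<Longrightarrow> (w has_vector_derivative 0) (at_right s)"
    and ep: "\<epsilon> > 0"
  shows "norm (w b - w a) \<le> \<epsilon> * (b - a)"
proof -
  define S where "S = {s\<in>{a..b}. norm (w s - w a) \<le> \<epsilon> * (s - a)}"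
  have "S = {a..b} \<inter> (\<lambda>s. norm (w s - w a) - \<epsilon> * (s - a)) -` {..0}"
    unfolding S_def by auto
  moreover have "continuous_on {a..b} (\<lambda>s. norm (w s - w a) - \<epsilon> * (s - a))"
    by (intro continuous_intros cont)
  ultimately have clS: "closed S" using continuous_closed_preimage by auto
  have aS: "a \<in> S" using ab unfolding S_def by auto
  have bdd: "bdd_above S" unfolding S_def by (auto intro: bdd_aboveI[of _ b])
  define m where "m = Sup S"
  have mS: "m \<in> S" unfolding m_def using closed_contains_Sup[OF _ bdd clS] aS by auto
  have "m = b"
  proof (rule ccontr)
    assume "m \<noteq> b"
    with mS have mb: "m < b" "a \<le> m" unfolding S_def by auto
    from der[OF mb(2) mb(1)] have "(w has_derivative (\<lambda>h. h *\<^sub>R 0)) (at m within {m<..})"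
      by (simp add: has_vector_derivative_def)
    then have "((\<lambda>y. (1 / norm (y - m)) *\<^sub>R (w y - (w m + (y - m) *\<^sub>R 0))) \<longlongrightarrow> 0) (at m within {m<..})"
      by (rule has_derivative_within[THEN iffD1, THEN conjunct2])
    then have "eventually (\<lambda>y. dist ((1 / norm (y - m)) *\<^sub>R (w y - (w m + (y - m) *\<^sub>R 0))) 0 < \<epsilon>) (at_right m)"
      using ep tendstoD by blast
    then obtain c where c: "c > m" "\<And>y. y > m \<Longrightarrow> y < c \<Longrightarrow> dist ((1 / norm (y - m)) *\<^sub>R (w y - (w m + (y - m) *\<^sub>R 0))) 0 < \<epsilon>"
      unfolding eventually_at_right_field by blast
    define u where "u = min ((m + b)/2) ((m+c)/2)"
    have u: "m < u" "u < c" "u < b" using mb c unfolding u_def by (auto simp: min_def)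
    have "norm (w u - w m) / (u - m) < \<epsilon>" using c(2)[OF u(1) u(2)] u
      by (simp add: dist_norm)
    then have "norm (w u - w m) \<le> \<epsilon> * (u - m)" using u by (simp add: divide_less_eq)
    moreover have "norm (w m - w a) \<le> \<epsilon> * (m - a)" using mS unfolding S_def by auto
    ultimately have "norm (w u - w a) \<le> \<epsilon> * (u - a)"
      using norm_triangle_ineq[of "w u - w m" "w m - w a"] by (simp add: algebra_simps)
    then have "u \<in> S" using u mb unfolding S_def by auto
    then have "u \<le> m" unfolding m_def using bdd by (simp add: cSup_upper)
    then show False using u by simp
  qed
  then show ?thesis using mS unfolding S_def by auto
qed

lemma rderiv_zero_const:
  fixes w :: "real \<Rightarrow> 'a::real_normed_vector"
  assumes ab: "a \<le> b" and cont: "continuous_on {a..b} w"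
    and der: "\<And>s. a \<le> s \<Longrightarrow> s < b \<Longrightarrow> (w has_vector_derivative 0) (at_right s)"
  shows "w b = w a"
proof (cases "a = b")
  case True then show ?thesis by simp
next
  case False
  then have ab': "a < b" using ab by simp
  have "norm (w b - w a) \<le> e" if "e > 0" for e
  proof -
    have "norm (w b - w a) \<le> (e / (b - a)) * (b - a)"
      by (rule rderiv_zero_aux[OF ab cont der]) (use that ab' in auto)
    then show ?thesis using ab' by simp
  qed
  then have "norm (w b - w a) \<le> 0" using field_le_epsilon[of "norm (w b - w a)" 0] by simp
  then show ?thesis by simp
qed


lemma rderiv_eq:
  fixes g f :: "real \<Rightarrow> 'a::real_normed_vector"
  assumes ab: "a \<le> b" and cont: "continuous_on {a..b} g"
    and der: "\<And>s. a \<le> s \<Longrightarrow> s < b \<Longrightarrow> (g has_vector_derivative f' s) (at_right s)"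
    and fder: "\<And>s. (f has_vector_derivative f' s) (at s)"
  shows "g b = g a + (f b - f a)"
proof -
  have fc: "continuous_on {a..b} f"
    by (rule continuous_at_imp_continuous_on) (auto intro: has_vector_derivative_continuous[OF fder])
  have "(\<lambda>s. g s - f s) b = (\<lambda>s. g s - f s) a"
  proof (rule rderiv_zero_const[OF ab])
    show "continuous_on {a..b} (\<lambda>s. g s - f s)" using continuous_on_diff[OF cont fc] .
    fix s assume "a \<le> s" "s < b"
    have "((\<lambda>s. g s - f s) has_vector_derivative (f' s - f' s)) (at_right s)"
      using has_vector_derivative_diff[OF der[OF \<open>a \<le> s\<close> \<open>s < b\<close>]
          has_vector_derivative_at_within[OF fder]] .
    then show "((\<lambda>s. g s - f s) has_vector_derivative 0) (at_right s)" by simp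
  qed
  then show ?thesis by (simp add: algebra_simps)
qed

lemma comp_deriv:
  fixes y :: "real \<Rightarrow> real^'n"
  assumes "(y has_vector_derivative w) (at t within S)"
  shows "((\<lambda>u. y u $ d) has_real_derivative (w $ d)) (at t within S)"
proof -
  have "((\<lambda>u. y u $ d) has_vector_derivative (w $ d)) (at t within S)"
    using bounded_linear.has_vector_derivative[OF bounded_linear_vec_nth assms] .
  then show ?thesis by (simp add: has_real_derivative_iff_has_vector_derivative)
qed

lemma sm_facts:
  assumes sm: "solves_motion A F1 F2 d y v x"
  shows "y 0 = x" "v 0 = 0" "continuous_on {0..} v" "continuous_on {0..} y"
    "\<And>t. t \<ge> 0 \<Longrightarrow> (y has_vector_derivative v t) (at t within {0..})"
    "\<And>t. t \<ge> 0 \<Longrightarrow> (y has_vector_derivative v t) (at_right t)"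
    "\<And>t. t \<ge> 0 \<Longrightarrow> (v has_vector_derivative force A F1 F2 d (y t)) (at_right t)"
proof -
  show yd: "\<And>t. t \<ge> 0 \<Longrightarrow> (y has_vector_derivative v t) (at t within {0..})"
    using sm unfolding solves_motion_def by blast
  show "\<And>t. t \<ge> 0 \<Longrightarrow> (y has_vector_derivative v t) (at_right t)"
    by (rule has_vector_derivative_within_subset[OF yd]) auto
  show "continuous_on {0..} y"
    unfolding continuous_on_eq_continuous_within
    using has_vector_derivative_continuous[OF yd] by auto
  show "y 0 = x" "v 0 = 0" "continuous_on {0..} v" using sm unfolding solves_motion_def by blast+
  show "\<And>t. t \<ge> 0 \<Longrightarrow> (v has_vector_derivative force A F1 F2 d (y t)) (at_right t)"
    using sm unfolding solves_motion_def by blast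
qed


lemma phase1_formula:
  fixes y v :: "real \<Rightarrow> real^'n"
  assumes sm: "solves_motion A F1 F2 d y v x" and s: "s \<ge> 0"
    and below: "\<And>u. 0 \<le> u \<Longrightarrow> u < s \<Longrightarrow> y u $ d < A"
    and u: "0 \<le> u" "u \<le> s"
  shows "v u = u *\<^sub>R F1 \<and> y u = x + (u^2/2) *\<^sub>R F1"
proof -
  note f = sm_facts[OF sm]
  have vf: "v w = w *\<^sub>R F1" if w: "0 \<le> w" "w \<le> s" for w
  proof -
    have "v w = v 0 + (w *\<^sub>R F1 - 0 *\<^sub>R F1)"
    proof (rule rderiv_eq[OF w(1)])
      show "continuous_on {0..w} v" by (rule continuous_on_subset[OF f(3)]) auto
      fix t assume t: "0 \<le> t" "t < w"
      have "force A F1 F2 d (y t) = F1" using below[of t] t w unfolding force_def by auto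
      then show "(v has_vector_derivative F1) (at_right t)" using f(7)[OF t(1)] by simp
    next
      fix t show "((\<lambda>t. t *\<^sub>R F1) has_vector_derivative F1) (at t)"
        by (auto intro!: derivative_eq_intros)
    qed
    then show ?thesis using f(2) by simp
  qed
  have "y u = y 0 + ((u^2/2) *\<^sub>R F1 - (0^2/2) *\<^sub>R F1)"
  proof (rule rderiv_eq[OF u(1)])
    show "continuous_on {0..u} y" by (rule continuous_on_subset[OF f(4)]) auto
    fix t assume t: "0 \<le> t" "t < u"
    show "(y has_vector_derivative t *\<^sub>R F1) (at_right t)"
      using f(6)[OF t(1)] vf[of t] t u by simp
  next
    fix t show "((\<lambda>t. (t^2/2) *\<^sub>R F1) has_vector_derivative t *\<^sub>R F1) (at t)"
      by (auto intro!: derivative_eq_intros)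
  qed
  then show ?thesis using vf[OF u] f(1) by simp
qed

lemma phase2_formula:
  fixes y v :: "real \<Rightarrow> real^'n"
  assumes sm: "solves_motion A F1 F2 d y v x" and T: "T \<ge> 0" and s: "s \<ge> T"
    and vT: "v T = T *\<^sub>R F1" and yT: "y T = x + (T^2/2) *\<^sub>R F1"
    and above: "\<And>u. T \<le> u \<Longrightarrow> u < s \<Longrightarrow> y u $ d \<ge> A"
    and u: "T \<le> u" "u \<le> s"
  shows "v u = T *\<^sub>R F1 + (u - T) *\<^sub>R F2 \<and>
         y u = x + (T^2/2) *\<^sub>R F1 + (T * (u - T)) *\<^sub>R F1 + ((u - T)^2/2) *\<^sub>R F2"
proof -
  note f = sm_facts[OF sm]
  have vf: "v w = T *\<^sub>R F1 + (w - T) *\<^sub>R F2" if w: "T \<le> w" "w \<le> s" for w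
  proof -
    have "v w = v T + ((w - T) *\<^sub>R F2 - (T - T) *\<^sub>R F2)"
    proof (rule rderiv_eq[OF w(1)])
      show "continuous_on {T..w} v" by (rule continuous_on_subset[OF f(3)]) (use T in auto)
      fix t assume t: "T \<le> t" "t < w"
      have "force A F1 F2 d (y t) = F2" using above[of t] t w unfolding force_def by auto
      then show "(v has_vector_derivative F2) (at_right t)" using f(7)[of t] t T by simp
    next
      fix t show "((\<lambda>t. (t - T) *\<^sub>R F2) has_vector_derivative F2) (at t)"
        by (auto intro!: derivative_eq_intros)
    qed
    then show ?thesis using vT by simp
  qed
  have "y u = y T + (((T * (u - T)) *\<^sub>R F1 + ((u - T)^2/2) *\<^sub>R F2)
                  - ((T * (T - T)) *\<^sub>R F1 + ((T - T)^2/2) *\<^sub>R F2))"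
  proof (rule rderiv_eq[OF u(1)])
    show "continuous_on {T..u} y" by (rule continuous_on_subset[OF f(4)]) (use T in auto)
    fix t assume t: "T \<le> t" "t < u"
    show "(y has_vector_derivative T *\<^sub>R F1 + (t - T) *\<^sub>R F2) (at_right t)"
      using f(6)[of t] vf[of t] t u T by simp
  next
    fix t show "((\<lambda>t. (T * (t - T)) *\<^sub>R F1 + ((t - T)^2/2) *\<^sub>R F2) has_vector_derivative
                   T *\<^sub>R F1 + (t - T) *\<^sub>R F2) (at t)"
      by (auto intro!: derivative_eq_intros)
  qed
  then show ?thesis using vf[OF u] yT by simp
qed


lemma explicit_sol:
  fixes y v :: "real \<Rightarrow> real^'n"
  assumes sm: "solves_motion A F1 F2 d y v x" and c: "F1 $ d > 0" and e: "F2 $ d \<ge> 0"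
    and xA: "x $ d < A" and T: "T \<ge> 0" and TE: "x $ d + F1 $ d * T^2 / 2 = A"
  shows "\<And>t. 0 \<le> t \<Longrightarrow> t \<le> T \<Longrightarrow> y t = x + (t^2/2) *\<^sub>R F1"
    and "\<And>t. T \<le> t \<Longrightarrow>
           y t = x + (T^2/2) *\<^sub>R F1 + (T * (t - T)) *\<^sub>R F1 + ((t - T)^2/2) *\<^sub>R F2"
proof -
  note f = sm_facts[OF sm]
  have ycd: "continuous_on {0..} (\<lambda>u. y u $ d)" using f(4) by (intro continuous_intros)
  have below: "y u $ d < A" if u: "0 \<le> u" "u < T" for u
  proof (rule ccontr)
    assume "\<not> y u $ d < A"
    define B where "B = {u. 0 \<le> u \<and> u < T \<and> y u $ d \<ge> A}"
    have Bne: "B \<noteq> {}" using u \<open>\<not> y u $ d < A\<close> unfolding B_def by auto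
    have bdd: "bdd_below B" unfolding B_def by (auto intro: bdd_belowI[of _ 0])
    define u0 where "u0 = Inf B"
    have "u0 \<in> closure B" unfolding u0_def by (rule closure_contains_Inf[OF Bne bdd])
    moreover have "closure B \<subseteq> {0..} \<inter> (\<lambda>u. y u $ d) -` {A..}"
      by (rule closure_minimal) (auto simp: B_def intro: continuous_closed_preimage[OF ycd])
    ultimately have u0: "0 \<le> u0" "y u0 $ d \<ge> A" by auto
    obtain b where b: "b \<in> B" using Bne by auto
    have "u0 \<le> b" unfolding u0_def using b bdd by (simp add: cInf_lower)
    with b have u0T: "u0 < T" unfolding B_def by auto
    have "y w $ d < A" if "0 \<le> w" "w < u0" for w
    proof -
      have "w \<notin> B"
      proof
        assume "w \<in> B" then have "u0 \<le> w" unfolding u0_def using bdd by (simp add: cInf_lower)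
        then show False using that by simp
      qed
      then show ?thesis using that u0T unfolding B_def by auto
    qed
    then have "y u0 = x + (u0^2/2) *\<^sub>R F1"
      using phase1_formula[OF sm u0(1), of u0] u0 by auto
    then have "y u0 $ d = x $ d + F1 $ d * u0^2 / 2" by simp
    moreover have "u0^2 < T^2" using u0 u0T by (simp add: power_strict_mono)
    moreover have "F1 $ d * u0^2 < F1 $ d * T^2" using mult_strict_left_mono[OF \<open>u0^2 < T^2\<close> c] .
    ultimately have "y u0 $ d < A" using TE by linarith
    then show False using u0 by simp
  qed
  have ph1: "v t = t *\<^sub>R F1 \<and> y t = x + (t^2/2) *\<^sub>R F1" if "0 \<le> t" "t \<le> T" for t
    using phase1_formula[OF sm T below] that by auto
  show "\<And>t. 0 \<le> t \<Longrightarrow> t \<le> T \<Longrightarrow> y t = x + (t^2/2) *\<^sub>R F1" using ph1 by auto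
  have vT: "v T = T *\<^sub>R F1" and yT: "y T = x + (T^2/2) *\<^sub>R F1" using ph1[OF T] by auto
  have Tpos: "T > 0" using TE xA T by (cases "T = 0") auto
  have above: "y u $ d \<ge> A" if u: "T \<le> u" for u
  proof (rule ccontr)
    assume "\<not> y u $ d \<ge> A"
    define B where "B = {u. T \<le> u \<and> y u $ d < A}"
    have Bne: "B \<noteq> {}" using u \<open>\<not> y u $ d \<ge> A\<close> unfolding B_def by auto
    have bdd: "bdd_below B" unfolding B_def by (auto intro: bdd_belowI[of _ T])
    define u1 where "u1 = Inf B"
    have u1T: "T \<le> u1" unfolding u1_def using Bne by (auto intro!: cInf_greatest simp: B_def)
    have ab: "y w $ d \<ge> A" if "T \<le> w" "w < u1" for w
    proof -
      have "w \<notin> B"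
      proof
        assume "w \<in> B" then have "u1 \<le> w" unfolding u1_def using bdd by (simp add: cInf_lower)
        then show False using that by simp
      qed
      then show ?thesis using that unfolding B_def by auto
    qed
    have ph2: "v u1 = T *\<^sub>R F1 + (u1 - T) *\<^sub>R F2 \<and>
         y u1 = x + (T^2/2) *\<^sub>R F1 + (T * (u1 - T)) *\<^sub>R F1 + ((u1 - T)^2/2) *\<^sub>R F2"
      using phase2_formula[OF sm T u1T vT yT ab] u1T by auto
    then have "y u1 $ d = x $ d + F1 $ d * T^2 / 2 + T * (u1 - T) * F1 $ d + (u1 - T)^2/2 * F2 $ d"
      by simp
    moreover have "T * (u1 - T) * F1 $ d \<ge> 0" using Tpos u1T c by simp
    moreover have "(u1 - T)^2/2 * F2 $ d \<ge> 0" using e by simp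
    ultimately have yu1: "y u1 $ d \<ge> A" using TE by linarith
    have "v u1 $ d = T * F1 $ d + (u1 - T) * F2 $ d" using ph2 by simp
    moreover have "(u1 - T) * F2 $ d \<ge> 0" using u1T e by simp
    moreover have "T * F1 $ d > 0" using Tpos c by simp
    ultimately have vpos: "v u1 $ d > 0" by linarith
    have "((\<lambda>u. y u $ d) has_real_derivative (v u1 $ d)) (at u1 within {0..})"
      by (rule comp_deriv[OF f(5)]) (use u1T T in auto)
    from has_real_derivative_pos_inc_right[OF this vpos]
    obtain del where del: "del > 0"
      "\<And>h. h > 0 \<Longrightarrow> u1 + h \<in> {0..} \<Longrightarrow> h < del \<Longrightarrow> y u1 $ d < y (u1 + h) $ d"
      by blast
    have "Inf B < u1 + del" using del(1) unfolding u1_def by simp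
    then obtain b where b: "b \<in> B" "b < u1 + del" using cInf_lessD[OF Bne] by blast
    have "u1 \<le> b" unfolding u1_def using b bdd by (simp add: cInf_lower)
    show False
    proof (cases "b = u1")
      case True then show False using b yu1 unfolding B_def by auto
    next
      case False
      then have "y u1 $ d < y (u1 + (b - u1)) $ d"
        using del(2)[of "b - u1"] \<open>u1 \<le> b\<close> b u1T T by auto
      then show False using b yu1 unfolding B_def by auto
    qed
  qed
  show "\<And>t. T \<le> t \<Longrightarrow>
           y t = x + (T^2/2) *\<^sub>R F1 + (T * (t - T)) *\<^sub>R F1 + ((t - T)^2/2) *\<^sub>R F2"
    using phase2_formula[OF sm T _ vT yT above] by auto
qed


lemma exists_T:
  fixes c a A :: real
  assumes "c > 0" "a < A"
  shows "\<exists>T\<ge>0. a + c * T^2 / 2 = A"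
proof (intro exI conjI)
  have nn: "2 * (A - a) / c \<ge> 0" using assms by (intro divide_nonneg_pos) auto
  then show "sqrt (2 * (A - a) / c) \<ge> 0" by simp
  from nn have "(sqrt (2 * (A - a) / c))^2 = 2 * (A - a) / c" by (rule real_sqrt_pow2)
  then show "a + c * (sqrt (2 * (A - a) / c))^2 / 2 = A" using assms by (simp add: field_simps)
qed

lemma mono_d:
  fixes c e a1 a2 A T1 T2 t :: real
  assumes c: "c > 0" and ce: "c \<le> e" and T2: "T2 > 0" and T12: "T2 < T1"
    and E1: "a1 + c * T1^2/2 = A" and E2: "a2 + c * T2^2/2 = A" and t: "t \<ge> 0"
  shows "(if t \<le> T1 then a1 + c * t^2/2 else a1 + c * T1^2/2 + T1 * (t - T1) * c + (t - T1)^2/2 * e)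
       < (if t \<le> T2 then a2 + c * t^2/2 else a2 + c * T2^2/2 + T2 * (t - T2) * c + (t - T2)^2/2 * e)"
proof -
  have sq: "T2^2 < T1^2" using T2 T12 by (simp add: power_strict_mono)
  have a12: "a1 < a2" using sq E1 E2 mult_strict_left_mono[OF sq c] by linarith
  consider "t \<le> T2" | "T2 < t" "t \<le> T1" | "T1 < t" by linarith
  then show ?thesis
  proof cases
    case 1 then show ?thesis using a12 T12 by simp
  next
    case 2
    have "t^2 \<le> T1^2" using 2 t by (simp add: power_mono)
    then have "c * t^2 \<le> c * T1^2" using c by simp
    then have L: "a1 + c * t^2/2 \<le> A" using E1 by linarith
    have "T2 * (t - T2) * c > 0" using 2 T2 c by simp
    moreover have "(t - T2)^2/2 * e \<ge> 0" using c ce by simp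
    ultimately have "a2 + c * T2^2/2 + T2 * (t - T2) * c + (t - T2)^2/2 * e > A" using E2 by linarith
    then show ?thesis using 2 L by simp
  next
    case 3
    define del where "del = T1 - T2"
    have del: "del > 0" using T12 by (simp add: del_def)
    have key: "(T2 * (t - T2) * c + (t - T2)^2/2 * e) - (T1 * (t - T1) * c + (t - T1)^2/2 * e)
             = del * (c * (T1 + T2 - t) + e / 2 * (2 * t - T1 - T2))"
      unfolding del_def by (simp add: power2_eq_square algebra_simps diff_divide_distrib add_divide_distrib)
    have "e / 2 * (2 * t - T1 - T2) \<ge> c / 2 * (2 * t - T1 - T2)"
      using ce 3 T12 by (intro mult_right_mono) auto
    moreover have "c * (T1 + T2 - t) + c / 2 * (2 * t - T1 - T2) = c * (T1 + T2) / 2"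
      by (simp add: algebra_simps)
    ultimately have "c * (T1 + T2 - t) + e / 2 * (2 * t - T1 - T2) \<ge> c * (T1 + T2) / 2"
      by linarith
    moreover have "c * (T1 + T2) / 2 > 0" using c T2 T12 by simp
    ultimately have "del * (c * (T1 + T2 - t) + e / 2 * (2 * t - T1 - T2)) > 0"
      using del by simp
    then show ?thesis using 3 T12 key E1 E2 by simp
  qed
qed


theorem theorem6:
  fixes A :: real and F1 F2 :: "real^'n" and d :: 'n
    and U :: "(real^'n) set" and y v :: "real^'n \<Rightarrow> real \<Rightarrow> real^'n"
  assumes "A > 0" and "F1 $ d > 0" and "F2 $ d \<ge> 0"
    and "open U" and "connected U" and "U \<noteq> {}"
    and "closure U \<subseteq> {z. z $ d < A}"
    and "\<forall>x\<in>closure U. solves_motion A F1 F2 d (y x) (v x) x"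
  shows "(\<forall>t\<ge>0. \<forall>x1\<in>closure U. \<forall>x2\<in>closure U. x1 \<noteq> x2 \<longrightarrow> y x1 t \<noteq> y x2 t)
         \<longleftrightarrow> F1 $ d \<le> F2 $ d"
proof -
  define c where "c = F1 $ d"
  define e where "e = F2 $ d"
  have c: "c > 0" and e: "e \<ge> 0" using assms(2,3) by (auto simp: c_def e_def)
  define H where "H T t = (if t \<le> T then (t^2/2) *\<^sub>R F1
      else (T^2/2) *\<^sub>R F1 + (T * (t - T)) *\<^sub>R F1 + ((t - T)^2/2) *\<^sub>R F2)" for T t :: real
  have clA: "x $ d < A" if "x \<in> closure U" for x using assms(7) that by auto
  have ysh: "y x t = x + H T t"
    if x: "x \<in> closure U" and T: "T \<ge> 0" "x $ d + c * T^2 / 2 = A" and t: "t \<ge> 0" for x T t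
  proof -
    have sm: "solves_motion A F1 F2 d (y x) (v x) x" using assms(8) x by auto
    note es = explicit_sol[OF sm assms(2,3) clA[OF x] T(1) T(2)[unfolded c_def]]
    show ?thesis
    proof (cases "t \<le> T")
      case True then show ?thesis using es(1)[OF t True] by (simp add: H_def)
    next
      case False then show ?thesis using es(2)[of t] by (simp add: H_def add.assoc)
    qed
  qed
  have Tex: "\<exists>T\<ge>0. x $ d + c * T^2 / 2 = A" if "x \<in> closure U" for x
    using exists_T[OF c clA[OF that]] .
  show ?thesis
  proof
    assume nocol: "\<forall>t\<ge>0. \<forall>x1\<in>closure U. \<forall>x2\<in>closure U. x1 \<noteq> x2 \<longrightarrow> y x1 t \<noteq> y x2 t"
    show "F1 $ d \<le> F2 $ d"
    proof (rule ccontr)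
      assume "\<not> F1 $ d \<le> F2 $ d"
      then have ec: "e < c" by (simp add: c_def e_def)
      obtain x0 where x0U: "x0 \<in> U" using assms(6) by auto
      obtain r where r: "r > 0" "ball x0 r \<subseteq> U" using assms(4) x0U openE by blast
      have x0: "x0 \<in> closure U" using x0U closure_subset by auto
      obtain T0 where T0: "T0 \<ge> 0" "x0 $ d + c * T0^2 / 2 = A" using Tex[OF x0] by auto
      have T0pos: "T0 > 0" using T0 clA[OF x0] by (cases "T0 = 0") auto
      define K where "K = (c * T0 + e / 2) / (c - e)"
      define N where "N = norm (F2 - F1)"
      define del where "del = min 1 (r / (2 * (K + 1) * (N + 1)))"
      define u where "u = (c * T0 + e * del / 2) / (c - e)"
      define Del where "Del = (del * (u + del / 2)) *\<^sub>R (F2 - F1)"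
      define x1 where "x1 = x0 + Del"
      define T1 where "T1 = T0 + del"
      define t where "t = T1 + u"
      have K0: "K \<ge> 0" unfolding K_def using c e ec T0 by (intro divide_nonneg_pos) auto
      have N0: "N \<ge> 0" unfolding N_def by simp
      have del0: "del > 0" unfolding del_def using r K0 N0 by auto
      have del1: "del \<le> 1" unfolding del_def by auto
      have delr: "del \<le> r / (2 * (K + 1) * (N + 1))" unfolding del_def by auto
      have u0: "u \<ge> 0" unfolding u_def using c e ec T0 del0 by (intro divide_nonneg_pos) auto
      have "c * T0 + e * del / 2 \<le> c * T0 + e / 2" using e del1 by (simp add: mult_left_le)
      then have uK: "u \<le> K" unfolding u_def K_def using ec by (intro divide_right_mono) auto
      have uce: "u * (c - e) = c * T0 + e * del / 2" unfolding u_def using ec by simp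
      have nD: "norm Del = del * (u + del / 2) * N" unfolding Del_def N_def using del0 u0 by simp
      also have "\<dots> \<le> del * (K + 1) * N"
        using del0 del1 uK N0 by (intro mult_right_mono mult_left_mono) auto
      also have "\<dots> \<le> del * (K + 1) * (N + 1)" using del0 K0 by simp
      also have "\<dots> \<le> r / (2 * (K + 1) * (N + 1)) * ((K + 1) * (N + 1))"
      proof -
        have "0 \<le> (K + 1) * (N + 1)" using K0 N0 by simp
        from mult_right_mono[OF delr this] show ?thesis by (simp only: mult.assoc)
      qed
      also have "\<dots> = r / 2"
      proof -
        have aux: "P \<noteq> 0 \<Longrightarrow> r / (2 * P) * P = r / (2::real)" for P by (simp add: field_simps)
        have "(K + 1) * (N + 1) \<noteq> 0" using K0 N0 by simp
        from aux[OF this] show ?thesis by (simp only: mult.assoc)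
      qed
      also have "\<dots> < r" using r by simp
      finally have "norm Del < r" .
      then have "x1 \<in> ball x0 r" unfolding x1_def by (simp add: dist_norm)
      then have "x1 \<in> U" using r(2) by blast
      then have x1: "x1 \<in> closure U" using closure_subset[of U] by blast
      have "Del $ d = del * (u + del / 2) * (e - c)" unfolding Del_def by (simp add: c_def e_def)
      also have "\<dots> = - (del * (u * (c - e))) - del^2 * (c - e) / 2"
        by (simp add: field_simps power2_eq_square)
      also have "\<dots> = - c * T0 * del - c * del^2 / 2" unfolding uce
        by (simp add: algebra_simps power2_eq_square diff_divide_distrib add_divide_distrib)
      finally have Dd: "Del $ d = - c * T0 * del - c * del^2 / 2" .
      have T1: "T1 \<ge> 0" "x1 $ d + c * T1^2 / 2 = A"
        using T0 del0 Dd unfolding x1_def T1_def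
        by (auto simp: power2_eq_square algebra_simps diff_divide_distrib add_divide_distrib)
      have "c * T0 * del > 0" "c * del^2 / 2 > 0" using c T0pos del0 by simp_all
      then have "Del $ d < 0" unfolding Dd by linarith
      then have neq: "x1 \<noteq> x0" unfolding x1_def by auto
      have t0: "t \<ge> 0" "\<not> t \<le> T0" "\<not> t \<le> T1 \<or> t = T1"
        unfolding t_def T1_def using T0 del0 u0 by auto
      have "y x1 t = x1 + H T1 t" by (rule ysh[OF x1 T1 t0(1)])
      moreover have "y x0 t = x0 + H T0 t" by (rule ysh[OF x0 T0 t0(1)])
      moreover have "x1 + H T1 t = x0 + H T0 t"
      proof -
        have h1: "H T1 t = (T1^2/2) *\<^sub>R F1 + (T1 * (t - T1)) *\<^sub>R F1 + ((t - T1)^2/2) *\<^sub>R F2"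
          unfolding H_def t_def using u0 by auto
        have h0: "H T0 t = (T0^2/2) *\<^sub>R F1 + (T0 * (t - T0)) *\<^sub>R F1 + ((t - T0)^2/2) *\<^sub>R F2"
          unfolding H_def using t0 by auto
        show ?thesis unfolding h1 h0 unfolding x1_def Del_def t_def T1_def
          by (simp add: vec_eq_iff power2_eq_square algebra_simps diff_divide_distrib add_divide_distrib)
      qed
      ultimately have "y x1 t = y x0 t" by simp
      then show False using nocol t0(1) x0 x1 neq by blast
    qed
  next
    assume "F1 $ d \<le> F2 $ d"
    then have ce: "c \<le> e" by (simp add: c_def e_def)
    have lt: "y xa t $ d < y xb t $ d"
      if xa: "xa \<in> closure U" and xb: "xb \<in> closure U" and ab: "xa $ d < xb $ d"
        and t: "t \<ge> 0" for xa xb t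
    proof -
      obtain Ta where Ta: "Ta \<ge> 0" "xa $ d + c * Ta^2 / 2 = A" using Tex[OF xa] by auto
      obtain Tb where Tb: "Tb \<ge> 0" "xb $ d + c * Tb^2 / 2 = A" using Tex[OF xb] by auto
      have Tbpos: "Tb > 0" using Tb clA[OF xb] by (cases "Tb = 0") auto
      have "c * Tb^2 < c * Ta^2" using Ta Tb ab by linarith
      then have "Tb^2 < Ta^2" using c by simp
      then have Tab: "Tb < Ta" using Ta(1) by (rule power_less_imp_less_base)
      have "y xa t $ d = (if t \<le> Ta then xa $ d + c * t^2/2
          else xa $ d + c * Ta^2/2 + Ta * (t - Ta) * c + (t - Ta)^2/2 * e)"
        using ysh[OF xa Ta t] by (simp add: H_def c_def e_def)
      moreover have "y xb t $ d = (if t \<le> Tb then xb $ d + c * t^2/2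
          else xb $ d + c * Tb^2/2 + Tb * (t - Tb) * c + (t - Tb)^2/2 * e)"
        using ysh[OF xb Tb t] by (simp add: H_def c_def e_def)
      ultimately show ?thesis using mono_d[OF c ce Tbpos Tab Ta(2) Tb(2) t] by simp
    qed
    show "\<forall>t\<ge>0. \<forall>x1\<in>closure U. \<forall>x2\<in>closure U. x1 \<noteq> x2 \<longrightarrow> y x1 t \<noteq> y x2 t"
    proof (intro allI impI ballI)
      fix t :: real and x1 x2 assume t: "t \<ge> 0" and x1: "x1 \<in> closure U" and x2: "x2 \<in> closure U"
        and neq: "x1 \<noteq> x2"
      consider "x1 $ d < x2 $ d" | "x2 $ d < x1 $ d" | "x1 $ d = x2 $ d" by linarith
      then show "y x1 t \<noteq> y x2 t"
      proof cases
        case 1 then show ?thesis using lt[OF x1 x2 _ t] by auto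
      next
        case 2 then show ?thesis using lt[OF x2 x1 _ t] by auto
      next
        case 3
        obtain T where T: "T \<ge> 0" "x1 $ d + c * T^2 / 2 = A" using Tex[OF x1] by auto
        have T2: "x2 $ d + c * T^2 / 2 = A" using T 3 by simp
        show ?thesis using ysh[OF x1 T t] ysh[OF x2 T(1) T2 t] neq by auto
      qed
    qed
  qed
qed

end
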